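(* Let $S$ be a finite semigroup such that $\equiv_{\mathsf{RM}}$ is the equality relation. Then the minimal degree of a faithful action of $S$ on a set by partial transformations is realized by a semisimple action, i.e., there is a faithful semisimple partial $S$-set of cardinality equal to the least cardinality of a faithful partial $S$-set.
   Context: Semigroups act on the right. For a regular $\mathscr J$-class $J$ (one containing an idempotent): $s\equiv_{\mathsf{RM},J}t$ iff for all $x\in J$, $xs\in J\iff xt\in J$, and if both lie in $J$ then $xs=xt$; $\equiv_{\mathsf{RM}}=\bigcap_J\equiv_{\mathsf{RM},J}$ over regular $J$. A partial $S$-set is a finite set $\Omega$ with a right action by partial maps; faithful means distinct elements act as distinct partial maps. The strong orbit of $\alpha$ is $\mathscr O_\alpha=\{\beta\mid\alpha S^1=\beta S^1\}$; it is transitive if $\mathscr O_\alpha S\cap\mathscr O_\alpha\ne\emptyset$. $\Omega$ is semisimple if every strong orbit is transitive and $S$-invariant (if $\alpha\in\mathscr O$ and $\alpha s$ is defined then $\alpha s\in\mathscr O$). *)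

theory Defs
  imports Main
begin

text \<open>Semigroups are modelled by the type class semigroup_mult (the whole type is S).
  Principal two-sided ideal S^1 s S^1.\<close>

definition ideal1 :: "'a::semigroup_mult \<Rightarrow> 'a set" where
  "ideal1 s = {s} \<union> {x * s | x. True} \<union> {s * y | y. True} \<union> {x * s * y | x y. True}"

definition J_equiv :: "'a::semigroup_mult \<Rightarrow> 'a \<Rightarrow> bool" where
  "J_equiv s t \<longleftrightarrow> ideal1 s = ideal1 t"

definition J_class :: "'a::semigroup_mult \<Rightarrow> 'a set" where
  "J_class s = {t. J_equiv s t}"

definition regular_J_class :: "'a::semigroup_mult set \<Rightarrow> bool" where
  "regular_J_class J \<longleftrightarrow> (\<exists>s. J = J_class s) \<and> (\<exists>e\<in>J. e * e = e)"

definition RM_equiv_J :: "'a::semigroup_mult set \<Rightarrow> 'a \<Rightarrow> 'a \<Rightarrow> bool" where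
  "RM_equiv_J J s t \<longleftrightarrow>
     (\<forall>x\<in>J. (x * s \<in> J \<longleftrightarrow> x * t \<in> J) \<and> (x * s \<in> J \<and> x * t \<in> J \<longrightarrow> x * s = x * t))"

definition RM_equiv :: "'a::semigroup_mult \<Rightarrow> 'a \<Rightarrow> bool" where
  "RM_equiv s t \<longleftrightarrow> (\<forall>J. regular_J_class J \<longrightarrow> RM_equiv_J J s t)"

text \<open>A partial S-set: finite set Omega with a right action by partial maps,
  act alpha s = Some beta meaning alpha s = beta, None meaning undefined.\<close>

definition partial_S_set :: "'b set \<Rightarrow> ('b \<Rightarrow> 'a::semigroup_mult \<Rightarrow> 'b option) \<Rightarrow> bool" where
  "partial_S_set \<Omega> act \<longleftrightarrow> finite \<Omega> \<and>
     (\<forall>\<alpha>\<in>\<Omega>. \<forall>s \<beta>. act \<alpha> s = Some \<beta> \<longrightarrow> \<beta> \<in> \<Omega>) \<and>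
     (\<forall>\<alpha>\<in>\<Omega>. \<forall>s t. act \<alpha> (s * t) = Option.bind (act \<alpha> s) (\<lambda>\<beta>. act \<beta> t))"

definition faithful :: "'b set \<Rightarrow> ('b \<Rightarrow> 'a::semigroup_mult \<Rightarrow> 'b option) \<Rightarrow> bool" where
  "faithful \<Omega> act \<longleftrightarrow> (\<forall>s t. (\<forall>\<alpha>\<in>\<Omega>. act \<alpha> s = act \<alpha> t) \<longrightarrow> s = t)"

definition orbit1 :: "('b \<Rightarrow> 'a::semigroup_mult \<Rightarrow> 'b option) \<Rightarrow> 'b \<Rightarrow> 'b set" where
  "orbit1 act \<alpha> = {\<alpha>} \<union> {\<beta>. \<exists>s. act \<alpha> s = Some \<beta>}"

definition strong_orbit :: "'b set \<Rightarrow> ('b \<Rightarrow> 'a::semigroup_mult \<Rightarrow> 'b option) \<Rightarrow> 'b \<Rightarrow> 'b set" where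
  "strong_orbit \<Omega> act \<alpha> = {\<beta>\<in>\<Omega>. orbit1 act \<alpha> = orbit1 act \<beta>}"

definition transitive_orbit :: "('b \<Rightarrow> 'a::semigroup_mult \<Rightarrow> 'b option) \<Rightarrow> 'b set \<Rightarrow> bool" where
  "transitive_orbit act Orb \<longleftrightarrow> (\<exists>\<gamma>\<in>Orb. \<exists>s \<delta>. act \<gamma> s = Some \<delta> \<and> \<delta> \<in> Orb)"

definition invariant_orbit :: "('b \<Rightarrow> 'a::semigroup_mult \<Rightarrow> 'b option) \<Rightarrow> 'b set \<Rightarrow> bool" where
  "invariant_orbit act Orb \<longleftrightarrow> (\<forall>\<beta>\<in>Orb. \<forall>s \<delta>. act \<beta> s = Some \<delta> \<longrightarrow> \<delta> \<in> Orb)"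

definition semisimple :: "'b set \<Rightarrow> ('b \<Rightarrow> 'a::semigroup_mult \<Rightarrow> 'b option) \<Rightarrow> bool" where
  "semisimple \<Omega> act \<longleftrightarrow> (\<forall>\<alpha>\<in>\<Omega>.
     transitive_orbit act (strong_orbit \<Omega> act \<alpha>) \<and> invariant_orbit act (strong_orbit \<Omega> act \<alpha>))"

end

theory Submission
  imports Defs
begin

primrec pw :: "'a::semigroup_mult \<Rightarrow> nat \<Rightarrow> 'a" where
  "pw c 0 = c" | "pw c (Suc n) = c * pw c n"

lemma pw_mult: "pw c m * pw c n = pw c (m + n + 1)"
  by (induction m) (simp_all add: mult.assoc)

lemma pw_shift:
  assumes "pw c i = pw c (i + d)" "i \<le> l"
  shows "pw c (l + d) = pw c l"
proof (cases "l = i")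
  case True then show ?thesis using assms by simp
next
  case False
  then obtain n where l: "l = i + n + 1" using assms(2)
    by (metis le_iff_add Suc_eq_plus1 add_Suc_right not0_implies_Suc add_0_right)
  have e1: "l + d = (i + d) + n + 1" using l by simp
  have "pw c (l + d) = pw c (i + d) * pw c n" unfolding e1 pw_mult ..
  also have "\<dots> = pw c l" unfolding l pw_mult[symmetric] using assms(1) by simp
  finally show ?thesis .
qed

lemma pw_period:
  assumes "pw c i = pw c (i + d)" "i \<le> l"
  shows "pw c (l + k * d) = pw c l"
proof (induction k)
  case 0 then show ?case by simp
next
  case (Suc k)
  have "pw c (l + Suc k * d) = pw c ((l + k * d) + d)" by (simp add: algebra_simps)
  also have "\<dots> = pw c (l + k * d)" using pw_shift[OF assms(1)] assms(2) by simp
  finally show ?case using Suc by simp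
qed

lemma pw_idem:
  fixes c :: "'a::{semigroup_mult,finite}"
  shows "\<exists>M. pw c M * pw c M = pw c M"
proof -
  have "\<not> inj (pw c)" using finite_imageD[of "pw c" UNIV] by auto
  then obtain i j where ij: "pw c i = pw c j" "i \<noteq> j" unfolding inj_def by blast
  then have "\<exists>i j. pw c i = pw c j \<and> i < j" by (metis linorder_neqE_nat)
  then obtain i j where ij: "pw c i = pw c j" "i < j" by blast
  define d where "d = j - i"
  define M where "M = (i + 1) * d - 1"
  have d: "d \<ge> 1" using ij d_def by simp
  have ijd: "pw c i = pw c (i + d)" using ij d_def by simp
  have ge: "(i+1)*d \<ge> i+1" using d mult_le_mono2[of 1 d "i+1"] by simp
  have Mi: "M \<ge> i" unfolding M_def using ge by linarith
  have M1: "M + 1 = (i + 1) * d" unfolding M_def using ge by linarith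
  have e: "M + M + 1 = M + (i+1) * d" using M1 by simp
  have "pw c M * pw c M = pw c (M + (i+1) * d)" unfolding pw_mult e ..
  also have "\<dots> = pw c M" using pw_period[OF ijd Mi, of "i+1"] by simp
  finally show ?thesis by blast
qed

lemma pw_conj:
  assumes "x = a * x * c"
  shows "x = pw a n * x * pw c n"
proof (induction n)
  case 0 then show ?case using assms by simp
next
  case (Suc n)
  have "pw a (Suc n) * x * pw c (Suc n) = a * (pw a n * x * pw c n) * c"
    using pw_mult[of c n 0] by (simp add: mult.assoc)
  also have "\<dots> = x" using Suc assms by simp
  finally show ?case by simp
qed

lemma stab_aux:
  fixes x :: "'a::{semigroup_mult,finite}"
  assumes "x = a * x * c"
  shows "x = x * c \<or> (\<exists>u. x = x * c * u)"
proof -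
  obtain M where M: "pw c M * pw c M = pw c M" using pw_idem by blast
  have "x = pw a M * x * pw c M" using pw_conj[OF assms] .
  also have "\<dots> = pw a M * x * pw c M * pw c M" using M by (simp add: mult.assoc)
  also have "\<dots> = x * pw c M" using pw_conj[OF assms, of M] by simp
  finally have x: "x = x * pw c M" .
  show ?thesis
  proof (cases M)
    case 0 then show ?thesis using x by simp
  next
    case (Suc m) then show ?thesis using x by (auto simp: mult.assoc)
  qed
qed

lemma stab:
  fixes x :: "'a::{semigroup_mult,finite}"
  assumes "ideal1 x = ideal1 (x * s)"
  shows "x = x * s \<or> (\<exists>u. x = x * s * u)"
proof -
  have "x \<in> ideal1 (x * s)" using assms unfolding ideal1_def by auto
  then consider "x = x * s" | a where "x = a * (x * s)" | b where "x = x * s * b"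
     | a b where "x = a * (x * s) * b"
    unfolding ideal1_def by blast
  then show ?thesis
  proof cases
    case 1 then show ?thesis by blast
  next
    case (2 a) then show ?thesis using stab_aux[of x a s] by (simp add: mult.assoc)
  next
    case (3 b) then show ?thesis by blast
  next
    case (4 a b)
    then have "x = a * x * (s * b)" by (simp add: mult.assoc)
    from stab_aux[OF this] show ?thesis by (metis mult.assoc)
  qed
qed


lemma pss_law:
  assumes "partial_S_set \<Omega> act" "\<alpha> \<in> \<Omega>"
  shows "act \<alpha> (s * t) = Option.bind (act \<alpha> s) (\<lambda>\<beta>. act \<beta> t)"
proof -
  have "\<forall>\<alpha>\<in>\<Omega>. \<forall>s t. act \<alpha> (s * t) = Option.bind (act \<alpha> s) (\<lambda>\<beta>. act \<beta> t)"
    using assms(1) unfolding partial_S_set_def by (elim conjE)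
  then show ?thesis using assms(2) by blast
qed

lemma pss_closed:
  assumes "partial_S_set \<Omega> act" "\<alpha> \<in> \<Omega>" "act \<alpha> s = Some \<beta>"
  shows "\<beta> \<in> \<Omega>"
proof -
  have "\<forall>\<alpha>\<in>\<Omega>. \<forall>s \<beta>. act \<alpha> s = Some \<beta> \<longrightarrow> \<beta> \<in> \<Omega>"
    using assms(1) unfolding partial_S_set_def by (elim conjE)
  then show ?thesis using assms(2,3) by blast
qed

lemma orbit1_closed:
  assumes "partial_S_set \<Omega> act" "\<alpha> \<in> \<Omega>" "\<gamma> \<in> orbit1 act \<alpha>"
  shows "\<gamma> \<in> \<Omega>"
  using assms pss_closed[OF assms(1,2)] unfolding orbit1_def by auto

lemma orbit1_trans:
  assumes "partial_S_set \<Omega> act" "\<alpha> \<in> \<Omega>" "\<gamma> \<in> orbit1 act \<alpha>"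
  shows "orbit1 act \<gamma> \<subseteq> orbit1 act \<alpha>"
proof
  fix \<delta> assume d: "\<delta> \<in> orbit1 act \<gamma>"
  show "\<delta> \<in> orbit1 act \<alpha>"
  proof (cases "\<gamma> = \<alpha>")
    case True then show ?thesis using d by simp
  next
    case False
    then obtain s where s: "act \<alpha> s = Some \<gamma>" using assms(3) unfolding orbit1_def by auto
    show ?thesis
    proof (cases "\<delta> = \<gamma>")
      case True then show ?thesis using assms(3) by simp
    next
      case False
      then obtain t where t: "act \<gamma> t = Some \<delta>" using d unfolding orbit1_def by auto
      have "act \<alpha> (s * t) = Some \<delta>" using pss_law[OF assms(1,2)] s t by simp
      then show ?thesis unfolding orbit1_def by blast
    qed
  qed
qed

lemma orbit1_self: "\<alpha> \<in> orbit1 act \<alpha>" unfolding orbit1_def by simp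

lemma orbit1_step: "act \<alpha> s = Some \<beta> \<Longrightarrow> \<beta> \<in> orbit1 act \<alpha>" unfolding orbit1_def by blast

lemma so_iff: "\<beta> \<in> strong_orbit \<Omega> act \<alpha> \<longleftrightarrow> \<beta> \<in> \<Omega> \<and> orbit1 act \<alpha> = orbit1 act \<beta>"
  unfolding strong_orbit_def by simp

lemma so_eq: "orbit1 act \<alpha> = orbit1 act \<beta> \<Longrightarrow> strong_orbit \<Omega> act \<alpha> = strong_orbit \<Omega> act \<beta>"
  unfolding strong_orbit_def by simp

lemma mid_in_orbit:
  assumes P: "partial_S_set \<Omega> act" and a: "\<beta> \<in> \<Omega>"
    and s: "act \<beta> s = Some \<gamma>" and t: "act \<gamma> t = Some \<delta>"
    and d: "\<delta> \<in> strong_orbit \<Omega> act \<beta>"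
  shows "\<gamma> \<in> strong_orbit \<Omega> act \<beta>"
proof -
  have g: "\<gamma> \<in> \<Omega>" using pss_closed[OF P a s] .
  have 1: "orbit1 act \<gamma> \<subseteq> orbit1 act \<beta>" using orbit1_trans[OF P a orbit1_step[of act \<beta> s \<gamma>, OF s]] .
  have 2: "orbit1 act \<delta> \<subseteq> orbit1 act \<gamma>" using orbit1_trans[OF P g orbit1_step[of act \<gamma> t \<delta>, OF t]] .
  have 3: "orbit1 act \<beta> = orbit1 act \<delta>" using d by (simp add: so_iff)
  have "orbit1 act \<beta> = orbit1 act \<gamma>" using 1 2 3 by (rule_tac equalityI) auto
  then show ?thesis using g by (simp add: so_iff)
qed

definition restr :: "'b set \<Rightarrow> ('b \<Rightarrow> 'a::semigroup_mult \<Rightarrow> 'b option) \<Rightarrow> 'b \<Rightarrow> 'a \<Rightarrow> 'b option" where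
  "restr \<Omega> act \<beta> s = (if transitive_orbit act (strong_orbit \<Omega> act \<beta>) \<and>
      (\<exists>\<gamma>. act \<beta> s = Some \<gamma> \<and> \<gamma> \<in> strong_orbit \<Omega> act \<beta>) then act \<beta> s else None)"

definition Tset :: "'b set \<Rightarrow> ('b \<Rightarrow> 'a::semigroup_mult \<Rightarrow> 'b option) \<Rightarrow> 'b set" where
  "Tset \<Omega> act = {\<beta>\<in>\<Omega>. transitive_orbit act (strong_orbit \<Omega> act \<beta>)}"

lemma restr_Some:
  "restr \<Omega> act \<beta> s = Some \<gamma> \<longleftrightarrow> transitive_orbit act (strong_orbit \<Omega> act \<beta>) \<and>
      act \<beta> s = Some \<gamma> \<and> \<gamma> \<in> strong_orbit \<Omega> act \<beta>"
  unfolding restr_def by auto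

lemma restr_None:
  "restr \<Omega> act \<beta> s = None \<longleftrightarrow> \<not> (transitive_orbit act (strong_orbit \<Omega> act \<beta>) \<and>
      (\<exists>\<gamma>. act \<beta> s = Some \<gamma> \<and> \<gamma> \<in> strong_orbit \<Omega> act \<beta>))"
  unfolding restr_def by auto

lemma so_member_same:
  assumes "\<gamma> \<in> strong_orbit \<Omega> act \<beta>"
  shows "strong_orbit \<Omega> act \<gamma> = strong_orbit \<Omega> act \<beta>"
  using assms by (auto simp: strong_orbit_def)

lemma restr_pss:
  assumes P: "partial_S_set \<Omega> act"
  shows "partial_S_set (Tset \<Omega> act) (restr \<Omega> act)"
  unfolding partial_S_set_def
proof (intro conjI ballI allI impI)
  show "finite (Tset \<Omega> act)" using P unfolding partial_S_set_def Tset_def by auto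
next
  fix \<alpha> s \<beta> assume a: "\<alpha> \<in> Tset \<Omega> act" and r: "restr \<Omega> act \<alpha> s = Some \<beta>"
  then have b1: "\<beta> \<in> strong_orbit \<Omega> act \<alpha>" and b2: "transitive_orbit act (strong_orbit \<Omega> act \<alpha>)"
    by (simp_all add: restr_Some)
  have "\<beta> \<in> \<Omega>" using b1 by (simp add: so_iff)
  then show "\<beta> \<in> Tset \<Omega> act" unfolding Tset_def using so_member_same[OF b1] b2 by simp
next
  fix \<beta> s t assume b: "\<beta> \<in> Tset \<Omega> act"
  let ?O = "strong_orbit \<Omega> act"
  have bO: "\<beta> \<in> \<Omega>" and tr: "transitive_orbit act (?O \<beta>)" using b unfolding Tset_def by auto
  have law: "act \<beta> (s * t) = Option.bind (act \<beta> s) (\<lambda>\<beta>. act \<beta> t)" using pss_law[OF P bO] .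
  show "restr \<Omega> act \<beta> (s * t) = Option.bind (restr \<Omega> act \<beta> s) (\<lambda>\<beta>. restr \<Omega> act \<beta> t)"
  proof (cases "act \<beta> s")
    case None
    then show ?thesis using law by (simp add: restr_def)
  next
    case (Some \<gamma>)
    note g = Some
    show ?thesis
    proof (cases "act \<gamma> t")
      case None
      then have "act \<beta> (s * t) = None" using law g by simp
      then have l: "restr \<Omega> act \<beta> (s * t) = None" by (simp add: restr_def)
      have r: "restr \<Omega> act \<gamma> t = None" using None by (simp add: restr_def)
      have "restr \<Omega> act \<beta> s = None \<or> restr \<Omega> act \<beta> s = Some \<gamma>"
        using g by (simp add: restr_def)
      then show ?thesis using l r by auto
    next
      case (Some \<delta>)
      note d = Some
      have st: "act \<beta> (s * t) = Some \<delta>" using law g d by simp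
      show ?thesis
      proof (cases "\<delta> \<in> ?O \<beta>")
        case True
        have gO: "\<gamma> \<in> ?O \<beta>" using mid_in_orbit[OF P bO g d True] .
        have eq: "?O \<gamma> = ?O \<beta>" using so_member_same[OF gO] .
        have "restr \<Omega> act \<beta> (s * t) = Some \<delta>" using st True tr by (simp add: restr_Some)
        moreover have "restr \<Omega> act \<beta> s = Some \<gamma>" using g gO tr by (simp add: restr_Some)
        moreover have "restr \<Omega> act \<gamma> t = Some \<delta>" using d True tr eq by (simp add: restr_Some)
        ultimately show ?thesis by simp
      next
        case False
        have "restr \<Omega> act \<beta> (s * t) = None" using st False by (simp add: restr_def)
        moreover have "Option.bind (restr \<Omega> act \<beta> s) (\<lambda>\<beta>. restr \<Omega> act \<beta> t) = None"
        proof (cases "restr \<Omega> act \<beta> s")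
          case None then show ?thesis by simp
        next
          case (Some \<gamma>')
          then have "\<gamma>' = \<gamma>" and gO: "\<gamma> \<in> ?O \<beta>" using g by (simp_all add: restr_Some)
          have eq: "?O \<gamma> = ?O \<beta>" using so_member_same[OF gO] .
          have "restr \<Omega> act \<gamma> t = None" using d False eq by (simp add: restr_def)
          then show ?thesis using Some \<open>\<gamma>' = \<gamma>\<close> by simp
        qed
        ultimately show ?thesis by simp
      qed
    qed
  qed
qed


lemma so_self: "\<alpha> \<in> \<Omega> \<Longrightarrow> \<alpha> \<in> strong_orbit \<Omega> act \<alpha>"
  by (simp add: so_iff)

lemma restr_orbit1:
  assumes P: "partial_S_set \<Omega> act" and a: "\<alpha> \<in> Tset \<Omega> act"
  shows "orbit1 (restr \<Omega> act) \<alpha> = strong_orbit \<Omega> act \<alpha>"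
proof
  have aO: "\<alpha> \<in> \<Omega>" and tr: "transitive_orbit act (strong_orbit \<Omega> act \<alpha>)"
    using a unfolding Tset_def by auto
  show "orbit1 (restr \<Omega> act) \<alpha> \<subseteq> strong_orbit \<Omega> act \<alpha>"
  proof
    fix \<beta> assume "\<beta> \<in> orbit1 (restr \<Omega> act) \<alpha>"
    then have "\<beta> = \<alpha> \<or> (\<exists>s. restr \<Omega> act \<alpha> s = Some \<beta>)" unfolding orbit1_def by auto
    then show "\<beta> \<in> strong_orbit \<Omega> act \<alpha>" using so_self[OF aO] restr_Some by metis
  qed
  show "strong_orbit \<Omega> act \<alpha> \<subseteq> orbit1 (restr \<Omega> act) \<alpha>"
  proof
    fix \<beta> assume b: "\<beta> \<in> strong_orbit \<Omega> act \<alpha>"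
    then have "\<beta> \<in> orbit1 act \<alpha>" using orbit1_self[of \<beta> act] by (simp add: so_iff)
    then have "\<beta> = \<alpha> \<or> (\<exists>s. act \<alpha> s = Some \<beta>)" unfolding orbit1_def by auto
    then show "\<beta> \<in> orbit1 (restr \<Omega> act) \<alpha>"
    proof
      assume "\<beta> = \<alpha>" then show ?thesis by (simp add: orbit1_self)
    next
      assume "\<exists>s. act \<alpha> s = Some \<beta>"
      then obtain s where s: "act \<alpha> s = Some \<beta>" by blast
      have "restr \<Omega> act \<alpha> s = Some \<beta>" using s b tr by (simp add: restr_Some)
      then show ?thesis by (rule orbit1_step)
    qed
  qed
qed

lemma restr_so:
  assumes P: "partial_S_set \<Omega> act" and a: "\<alpha> \<in> Tset \<Omega> act"
  shows "strong_orbit (Tset \<Omega> act) (restr \<Omega> act) \<alpha> = strong_orbit \<Omega> act \<alpha>"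
proof
  show "strong_orbit (Tset \<Omega> act) (restr \<Omega> act) \<alpha> \<subseteq> strong_orbit \<Omega> act \<alpha>"
  proof
    fix \<beta> assume b: "\<beta> \<in> strong_orbit (Tset \<Omega> act) (restr \<Omega> act) \<alpha>"
    then have bT: "\<beta> \<in> Tset \<Omega> act" and e: "orbit1 (restr \<Omega> act) \<alpha> = orbit1 (restr \<Omega> act) \<beta>"
      by (simp_all add: so_iff)
    have "strong_orbit \<Omega> act \<alpha> = strong_orbit \<Omega> act \<beta>"
      using e restr_orbit1[OF P a] restr_orbit1[OF P bT] by simp
    moreover have "\<beta> \<in> \<Omega>" using bT unfolding Tset_def by simp
    ultimately show "\<beta> \<in> strong_orbit \<Omega> act \<alpha>" using so_self by metis
  qed
  show "strong_orbit \<Omega> act \<alpha> \<subseteq> strong_orbit (Tset \<Omega> act) (restr \<Omega> act) \<alpha>"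
  proof
    fix \<beta> assume b: "\<beta> \<in> strong_orbit \<Omega> act \<alpha>"
    have eq: "strong_orbit \<Omega> act \<beta> = strong_orbit \<Omega> act \<alpha>" using so_member_same[OF b] .
    have bO: "\<beta> \<in> \<Omega>" using b by (simp add: so_iff)
    have bT: "\<beta> \<in> Tset \<Omega> act" using a bO eq unfolding Tset_def by simp
    show "\<beta> \<in> strong_orbit (Tset \<Omega> act) (restr \<Omega> act) \<alpha>"
      using bT restr_orbit1[OF P a] restr_orbit1[OF P bT] eq by (simp add: so_iff)
  qed
qed

lemma restr_semisimple:
  assumes P: "partial_S_set \<Omega> act"
  shows "semisimple (Tset \<Omega> act) (restr \<Omega> act)"
  unfolding semisimple_def
proof (intro ballI conjI)
  fix \<alpha> assume a: "\<alpha> \<in> Tset \<Omega> act"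
  have so: "strong_orbit (Tset \<Omega> act) (restr \<Omega> act) \<alpha> = strong_orbit \<Omega> act \<alpha>" using restr_so[OF P a] .
  have tr: "transitive_orbit act (strong_orbit \<Omega> act \<alpha>)" using a unfolding Tset_def by auto
  then obtain \<gamma> s \<delta> where g: "\<gamma> \<in> strong_orbit \<Omega> act \<alpha>" and s: "act \<gamma> s = Some \<delta>"
    and d: "\<delta> \<in> strong_orbit \<Omega> act \<alpha>" unfolding transitive_orbit_def by blast
  have eq: "strong_orbit \<Omega> act \<gamma> = strong_orbit \<Omega> act \<alpha>" using so_member_same[OF g] .
  have "restr \<Omega> act \<gamma> s = Some \<delta>" using s d tr eq by (simp add: restr_Some)
  then show "transitive_orbit (restr \<Omega> act) (strong_orbit (Tset \<Omega> act) (restr \<Omega> act) \<alpha>)"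
    unfolding so transitive_orbit_def using g d by blast
  show "invariant_orbit (restr \<Omega> act) (strong_orbit (Tset \<Omega> act) (restr \<Omega> act) \<alpha>)"
    unfolding so invariant_orbit_def
  proof (intro ballI allI impI)
    fix \<beta> t \<delta>' assume b: "\<beta> \<in> strong_orbit \<Omega> act \<alpha>" and r: "restr \<Omega> act \<beta> t = Some \<delta>'"
    have "\<delta>' \<in> strong_orbit \<Omega> act \<beta>" using r by (simp add: restr_Some)
    then show "\<delta>' \<in> strong_orbit \<Omega> act \<alpha>" using so_member_same[OF b] by simp
  qed
qed

lemma restr_card:
  assumes P: "partial_S_set \<Omega> act"
  shows "card (Tset \<Omega> act) \<le> card \<Omega>"
  using P unfolding partial_S_set_def Tset_def by (intro card_mono) auto

lemma key_eq:
  fixes x s t :: "'a::{semigroup_mult,finite}"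
  assumes P: "partial_S_set \<Omega> act" and F: "faithful \<Omega> act"
    and H: "\<forall>\<beta>\<in>Tset \<Omega> act. restr \<Omega> act \<beta> s = restr \<Omega> act \<beta> t"
    and I: "ideal1 x = ideal1 (x * s)"
  shows "x * s = x * t"
proof -
  have "\<forall>\<alpha>\<in>\<Omega>. act \<alpha> (x * s) = act \<alpha> (x * t)"
  proof
    fix \<alpha> assume aO: "\<alpha> \<in> \<Omega>"
    show "act \<alpha> (x * s) = act \<alpha> (x * t)"
    proof (cases "act \<alpha> x")
      case None
      then show ?thesis using pss_law[OF P aO, of x s] pss_law[OF P aO, of x t] by simp
    next
      case (Some \<beta>)
      have bO: "\<beta> \<in> \<Omega>" using pss_closed[OF P aO Some] .
      have "\<exists>\<gamma>. act \<beta> s = Some \<gamma> \<and> \<gamma> \<in> strong_orbit \<Omega> act \<beta> \<and>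
              transitive_orbit act (strong_orbit \<Omega> act \<beta>)"
        using stab[OF I]
      proof
        assume x: "x = x * s"
        have "act \<alpha> x = act \<beta> s" using pss_law[OF P aO, of x s] Some x by simp
        then have bs: "act \<beta> s = Some \<beta>" using Some by simp
        have "transitive_orbit act (strong_orbit \<Omega> act \<beta>)"
          unfolding transitive_orbit_def using bs so_self[OF bO] by blast
        then show ?thesis using bs so_self[OF bO] by blast
      next
        assume "\<exists>u. x = x * s * u"
        then obtain u where x: "x = x * s * u" by blast
        have "act \<alpha> x = Option.bind (act \<alpha> (x * s)) (\<lambda>\<beta>. act \<beta> u)"
          using pss_law[OF P aO, of "x * s" u] x by simp
        also have "\<dots> = Option.bind (act \<beta> s) (\<lambda>\<beta>. act \<beta> u)"
          using pss_law[OF P aO, of x s] Some by simp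
        finally have e: "Option.bind (act \<beta> s) (\<lambda>\<beta>. act \<beta> u) = Some \<beta>" using Some by simp
        then obtain \<gamma> where g: "act \<beta> s = Some \<gamma>" and gu: "act \<gamma> u = Some \<beta>"
          by (cases "act \<beta> s") auto
        have gO: "\<gamma> \<in> strong_orbit \<Omega> act \<beta>" using mid_in_orbit[OF P bO g gu so_self[OF bO]] .
        have "transitive_orbit act (strong_orbit \<Omega> act \<beta>)"
          unfolding transitive_orbit_def using gO gu so_self[OF bO] by blast
        then show ?thesis using g gO by blast
      qed
      then obtain \<gamma> where g: "act \<beta> s = Some \<gamma>" and gO: "\<gamma> \<in> strong_orbit \<Omega> act \<beta>"
        and tr: "transitive_orbit act (strong_orbit \<Omega> act \<beta>)" by blast
      have bT: "\<beta> \<in> Tset \<Omega> act" using bO tr unfolding Tset_def by simp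
      have "restr \<Omega> act \<beta> s = Some \<gamma>" using g gO tr by (simp add: restr_Some)
      then have "restr \<Omega> act \<beta> t = Some \<gamma>" using H bT by metis
      then have gt: "act \<beta> t = Some \<gamma>" by (simp add: restr_Some)
      show ?thesis using pss_law[OF P aO, of x s] pss_law[OF P aO, of x t] Some g gt by simp
    qed
  qed
  then show ?thesis using F unfolding faithful_def by blast
qed

lemma restr_faithful:
  fixes act :: "'b \<Rightarrow> 'a::{semigroup_mult,finite} \<Rightarrow> 'b option"
  assumes RM: "\<forall>s t :: 'a. RM_equiv s t \<longrightarrow> s = t"
    and P: "partial_S_set \<Omega> act" and F: "faithful \<Omega> act"
  shows "faithful (Tset \<Omega> act) (restr \<Omega> act)"
  unfolding faithful_def
proof (intro allI impI)
  fix s t :: 'a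
  assume H: "\<forall>\<beta>\<in>Tset \<Omega> act. restr \<Omega> act \<beta> s = restr \<Omega> act \<beta> t"
  then have H': "\<forall>\<beta>\<in>Tset \<Omega> act. restr \<Omega> act \<beta> t = restr \<Omega> act \<beta> s" by simp
  have J: "ideal1 x = ideal1 y" if "x \<in> J_class z" "y \<in> J_class z" for x y z :: 'a
    using that unfolding J_class_def J_equiv_def by simp
  have "RM_equiv s t" unfolding RM_equiv_def RM_equiv_J_def regular_J_class_def
  proof (intro allI impI ballI)
    fix J :: "'a set" and x
    assume "(\<exists>z. J = J_class z) \<and> (\<exists>e\<in>J. e * e = e)" and xJ: "x \<in> J"
    then obtain z where Jz: "J = J_class z" by blast
    have 1: "x * s = x * t" if "x * s \<in> J"
      using key_eq[OF P F H J[of x z "x * s"]] that xJ Jz by simp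
    have 2: "x * t = x * s" if "x * t \<in> J"
      using key_eq[OF P F H' J[of x z "x * t"]] that xJ Jz by simp
    show "(x * s \<in> J) = (x * t \<in> J) \<and> (x * s \<in> J \<and> x * t \<in> J \<longrightarrow> x * s = x * t)"
      using 1 2 by metis
  qed
  then show "s = t" using RM by blast
qed


lemma transfer:
  fixes act :: "'b \<Rightarrow> 'a::semigroup_mult \<Rightarrow> 'b option" and f :: "'b \<Rightarrow> 'c"
  assumes P: "partial_S_set \<Omega> act" and F: "faithful \<Omega> act" and inj: "inj_on f \<Omega>"
  shows "\<exists>act2 :: 'c \<Rightarrow> 'a \<Rightarrow> 'c option. partial_S_set (f ` \<Omega>) act2 \<and> faithful (f ` \<Omega>) act2"
proof -
  define act2 where "act2 = (\<lambda>y s. if y \<in> f ` \<Omega> then map_option f (act (inv_into \<Omega> f y) s) else None)"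
  have A: "act2 (f \<alpha>) s = map_option f (act \<alpha> s)" if "\<alpha> \<in> \<Omega>" for \<alpha> s
    using that inj unfolding act2_def by simp
  have "partial_S_set (f ` \<Omega>) act2"
    unfolding partial_S_set_def
  proof (intro conjI ballI allI impI)
    show "finite (f ` \<Omega>)" using P unfolding partial_S_set_def by simp
  next
    fix y s z assume y: "y \<in> f ` \<Omega>" and z: "act2 y s = Some z"
    then obtain \<alpha> where a: "\<alpha> \<in> \<Omega>" "y = f \<alpha>" by blast
    then have "map_option f (act \<alpha> s) = Some z" using z A by simp
    then obtain \<beta> where "act \<alpha> s = Some \<beta>" "z = f \<beta>" by blast
    then show "z \<in> f ` \<Omega>" using pss_closed[OF P a(1)] by blast
  next
    fix y s t assume y: "y \<in> f ` \<Omega>"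
    then obtain \<alpha> where a: "\<alpha> \<in> \<Omega>" "y = f \<alpha>" by blast
    show "act2 y (s * t) = Option.bind (act2 y s) (\<lambda>\<beta>. act2 \<beta> t)"
    proof (cases "act \<alpha> s")
      case None
      then show ?thesis using a A pss_law[OF P a(1), of s t] by simp
    next
      case (Some \<beta>)
      have bO: "\<beta> \<in> \<Omega>" using pss_closed[OF P a(1) Some] .
      show ?thesis using a A[OF a(1)] A[OF bO] pss_law[OF P a(1), of s t] Some by simp
    qed
  qed
  moreover have "faithful (f ` \<Omega>) act2"
    unfolding faithful_def
  proof (intro allI impI)
    fix s t assume H: "\<forall>y\<in>f ` \<Omega>. act2 y s = act2 y t"
    have "\<forall>\<alpha>\<in>\<Omega>. act \<alpha> s = act \<alpha> t"
    proof
      fix \<alpha> assume a: "\<alpha> \<in> \<Omega>"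
      then have m: "map_option f (act \<alpha> s) = map_option f (act \<alpha> t)" using H A by force
      show "act \<alpha> s = act \<alpha> t"
      proof (cases "act \<alpha> s")
        case None then show ?thesis using m by simp
      next
        case (Some \<beta>)
        then obtain \<gamma> where g: "act \<alpha> t = Some \<gamma>" and fe: "f \<beta> = f \<gamma>" using m by (cases "act \<alpha> t") auto
        have "\<beta> \<in> \<Omega>" "\<gamma> \<in> \<Omega>" using pss_closed[OF P a] Some g by blast+
        then have "\<beta> = \<gamma>" using fe inj unfolding inj_on_def by blast
        then show ?thesis using Some g by simp
      qed
    qed
    then show "s = t" using F unfolding faithful_def by blast
  qed
  ultimately show ?thesis by blast
qed

lemma to_nat:
  fixes act :: "'b \<Rightarrow> 'a::semigroup_mult \<Rightarrow> 'b option"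
  assumes P: "partial_S_set \<Omega> act" and F: "faithful \<Omega> act"
  shows "\<exists>(\<Omega>2 :: nat set) (act2 :: nat \<Rightarrow> 'a \<Rightarrow> nat option).
           partial_S_set \<Omega>2 act2 \<and> faithful \<Omega>2 act2 \<and> card \<Omega>2 = card \<Omega>"
proof -
  have "finite \<Omega>" using P unfolding partial_S_set_def by simp
  then obtain f :: "'b \<Rightarrow> nat" where f: "bij_betw f \<Omega> {0..<card \<Omega>}"
    using ex_bij_betw_finite_nat by blast
  then have inj: "inj_on f \<Omega>" and im: "f ` \<Omega> = {0..<card \<Omega>}" unfolding bij_betw_def by auto
  obtain act2 :: "nat \<Rightarrow> 'a \<Rightarrow> nat option" where "partial_S_set (f ` \<Omega>) act2 \<and> faithful (f ` \<Omega>) act2"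
    using transfer[OF P F inj] by blast
  moreover have "card (f ` \<Omega>) = card \<Omega>" using im by simp
  ultimately show ?thesis by blast
qed

lemma exists_faithful:
  "\<exists>(\<Omega> :: 'a option set) (act :: 'a option \<Rightarrow> 'a::{semigroup_mult,finite} \<Rightarrow> 'a option option).
      partial_S_set \<Omega> act \<and> faithful \<Omega> act"
proof -
  define act :: "'a option \<Rightarrow> 'a \<Rightarrow> 'a option option" where
    "act = (\<lambda>x s. case x of None \<Rightarrow> Some (Some s) | Some y \<Rightarrow> Some (Some (y * s)))"
  have "partial_S_set UNIV act"
    unfolding partial_S_set_def
  proof (intro conjI ballI allI impI)
    show "finite (UNIV :: 'a option set)" by simp
  next
    fix x s t show "act x (s * t) = Option.bind (act x s) (\<lambda>\<beta>. act \<beta> t)"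
      by (cases x) (simp_all add: act_def mult.assoc)
  qed simp
  moreover have "faithful UNIV act"
    unfolding faithful_def
  proof (intro allI impI)
    fix s t assume "\<forall>\<alpha>\<in>UNIV. act \<alpha> s = act \<alpha> t"
    then have "act None s = act None t" by blast
    then show "s = t" by (simp add: act_def)
  qed
  ultimately show ?thesis by blast
qed

theorem corollary2p3:
  assumes "\<forall>s t :: 'a::{semigroup_mult, finite}. RM_equiv s t \<longrightarrow> s = t"
  shows "\<exists>(\<Omega> :: nat set) (act :: nat \<Rightarrow> 'a \<Rightarrow> nat option).
           partial_S_set \<Omega> act \<and> faithful \<Omega> act \<and> semisimple \<Omega> act \<and>
           (\<forall>(\<Omega>' :: 'b set) (act' :: 'b \<Rightarrow> 'a \<Rightarrow> 'b option).
               partial_S_set \<Omega>' act' \<and> faithful \<Omega>' act' \<longrightarrow> card \<Omega> \<le> card \<Omega>')"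
proof -
  define Pn where "Pn = (\<lambda>n. \<exists>(\<Omega> :: nat set) (act :: nat \<Rightarrow> 'a \<Rightarrow> nat option).
           partial_S_set \<Omega> act \<and> faithful \<Omega> act \<and> card \<Omega> = n)"
  obtain \<Omega>0 :: "'a option set" and act0 :: "'a option \<Rightarrow> 'a \<Rightarrow> 'a option option"
    where "partial_S_set \<Omega>0 act0" "faithful \<Omega>0 act0" using exists_faithful by blast
  then have "Pn (card \<Omega>0)" unfolding Pn_def using to_nat by blast
  then have "Pn (Least Pn)" by (rule LeastI)
  then obtain \<Omega> :: "nat set" and act :: "nat \<Rightarrow> 'a \<Rightarrow> nat option"
    where P: "partial_S_set \<Omega> act" and F: "faithful \<Omega> act" and c: "card \<Omega> = Least Pn"
    unfolding Pn_def by blast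
  have min: "card (Tset \<Omega> act) \<le> card \<Omega>'"
    if "partial_S_set \<Omega>' act'" "faithful \<Omega>' act'" for \<Omega>' :: "'b set" and act' :: "'b \<Rightarrow> 'a \<Rightarrow> 'b option"
  proof -
    have "Pn (card \<Omega>')" unfolding Pn_def using to_nat[OF that] by blast
    then have "Least Pn \<le> card \<Omega>'" by (rule Least_le)
    then show ?thesis using restr_card[OF P] c by simp
  qed
  show ?thesis
    using restr_pss[OF P] restr_faithful[OF assms P F] restr_semisimple[OF P] min by blast
qed

end
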